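(* Consider a $2\times N$ switch with traffic pattern consisting of one broadcast flow from input 1 to all $N$ outputs with rate $r_0$ and, for each $i\in[N]$, a unicast flow from input 2 to output $i$ with rate $r_i$. With fanout splitting but no coding, the achievable rate region is exactly the set of (rational) vectors $(r_0,r_1,\dots,r_N)$ satisfying $r_i\ge0$ for $i=0,\dots,N$; $\sum_{i=1}^N r_i\le1$; $r_0+r_i\le1$ for $i=1,\dots,N$; and $2r_0+\sum_{i=1}^N r_i\le 2$.
   Context: Slotted time. A configuration: each input idles or picks one of its flows and connects to a subset of that flow's fanout outputs, sending one packet to all connected outputs; each output connects to at most one input. Without coding, every transmitted packet is one original packet of the flow (fanout splitting means a broadcast packet may be delivered to different outputs in different slots); a packet is served once it has been delivered to all outputs in its fanout and is then removed from its queue. A frame is $F$ consecutive slots; a frame-based schedule is a fixed sequence of $F$ configurations repeated each frame. Here the achievable rate region is the set of rational rate vectors for which there is a frame-based schedule (without coding) with frame size $F$ such that each $r_iF$ is an integer and, for every flow and every frame $n\ge1$, the oldest $r F$ packets (with $r$ the flow's rate) in the flow's queue at the end of frame $n-1$ are served by the end of frame $n$ (all of them if there are fewer). *)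

theory Defs
  imports Complex_Main
begin

text \<open>Flows are natural numbers drawn from a finite set Fl; flow f enters at input
  inp f and has fanout set fan f (a set of outputs).  A configuration maps each
  input either to None (idle) or to Some (f, S): the input picks its flow f and
  connects to the subset S of the fanout of f.\<close>

type_synonym config = "nat \<Rightarrow> (nat \<times> nat set) option"

definition valid_config ::
  "nat set \<Rightarrow> (nat \<Rightarrow> nat) \<Rightarrow> (nat \<Rightarrow> nat set) \<Rightarrow> config \<Rightarrow> bool" where
  "valid_config Fl inp fan c \<longleftrightarrow>
     (\<forall>i f S. c i = Some (f, S) \<longrightarrow> f \<in> Fl \<and> inp f = i \<and> S \<subseteq> fan f) \<and>
     (\<forall>i1 i2 f1 f2 S1 S2. c i1 = Some (f1, S1) \<and> c i2 = Some (f2, S2) \<and> i1 \<noteq> i2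
        \<longrightarrow> S1 \<inter> S2 = {})"

text \<open>Arrivals: A f t is the number of packets of flow f that have arrived before
  slot t (i.e. are available for transmission in slot t); packets of a flow are
  numbered 0,1,2,... in arrival order.  Packet selection (no coding):
  P A t i is the packet (index of the flow chosen by input i in slot t) that
  input i transmits in slot t under arrival process A (None = nothing sent).\<close>

definition delivered ::
  "(nat \<Rightarrow> config) \<Rightarrow> nat \<Rightarrow> (nat \<Rightarrow> nat \<Rightarrow> nat option) \<Rightarrow> nat \<Rightarrow> nat \<Rightarrow> nat \<Rightarrow> nat \<Rightarrow> bool" where
  "delivered sched F P f k j T \<longleftrightarrow>
     (\<exists>t<T. \<exists>i S. sched (t mod F) i = Some (f, S) \<and> j \<in> S \<and> P t i = Some k)"

definition served ::
  "(nat \<Rightarrow> nat set) \<Rightarrow> (nat \<Rightarrow> config) \<Rightarrow> nat \<Rightarrow> (nat \<Rightarrow> nat \<Rightarrow> nat option) \<Rightarrow> nat \<Rightarrow> nat \<Rightarrow> nat \<Rightarrow> bool" where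
  "served fan sched F P f k T \<longleftrightarrow> (\<forall>j\<in>fan f. delivered sched F P f k j T)"

definition in_queue ::
  "(nat \<Rightarrow> nat \<Rightarrow> nat) \<Rightarrow> (nat \<Rightarrow> nat set) \<Rightarrow> (nat \<Rightarrow> config) \<Rightarrow> nat \<Rightarrow> (nat \<Rightarrow> nat \<Rightarrow> nat option)
     \<Rightarrow> nat \<Rightarrow> nat \<Rightarrow> nat \<Rightarrow> bool" where
  "in_queue A fan sched F P f k T \<longleftrightarrow> k < A f T \<and> \<not> served fan sched F P f k T"

definition causal :: "((nat \<Rightarrow> nat \<Rightarrow> nat) \<Rightarrow> nat \<Rightarrow> nat \<Rightarrow> nat option) \<Rightarrow> bool" where
  "causal P \<longleftrightarrow> (\<forall>A A' t i. (\<forall>f s. s \<le> t \<longrightarrow> A f s = A' f s) \<longrightarrow> P A t i = P A' t i)"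

definition achievable ::
  "nat set \<Rightarrow> (nat \<Rightarrow> nat) \<Rightarrow> (nat \<Rightarrow> nat set) \<Rightarrow> (nat \<Rightarrow> rat) \<Rightarrow> bool" where
  "achievable Fl inp fan r \<longleftrightarrow>
     (\<exists>F::nat. F > 0 \<and> (\<exists>q::nat \<Rightarrow> nat. (\<forall>f\<in>Fl. r f * of_nat F = of_nat (q f)) \<and>
       (\<exists>sched P. (\<forall>t<F. valid_config Fl inp fan (sched t)) \<and> causal P \<and>
         (\<forall>A. (\<forall>f. mono (A f)) \<longrightarrow>
            (\<forall>t i f S k. sched (t mod F) i = Some (f, S) \<and> P A t i = Some k
                 \<longrightarrow> in_queue A fan sched F (P A) f k t) \<and>
            (\<forall>f\<in>Fl. \<forall>n\<ge>1. \<forall>k. in_queue A fan sched F (P A) f k ((n - 1) * F) \<and>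
                 card {k'. k' < k \<and> in_queue A fan sched F (P A) f k' ((n - 1) * F)} < q f
                 \<longrightarrow> served fan sched F (P A) f k (n * F))))))"

definition flows2N :: "nat \<Rightarrow> nat set" where "flows2N N = {0..N}"
definition inp2N :: "nat \<Rightarrow> nat" where "inp2N f = (if f = 0 then 1 else 2)"
definition fan2N :: "nat \<Rightarrow> nat \<Rightarrow> nat set" where
  "fan2N N f = (if f = 0 then {1..N} else {f})"

end

theory Submission
  imports Defs
begin


locale design =
  fixes Fl :: "nat set" and inp :: "nat \<Rightarrow> nat" and fan :: "nat \<Rightarrow> nat set"
    and F :: nat and q :: "nat \<Rightarrow> nat" and cfg :: "nat \<Rightarrow> config" and grp :: "nat \<Rightarrow> nat \<Rightarrow> nat"
  assumes Fpos: "F > 0"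
    and V: "\<And>u. u < F \<Longrightarrow> valid_config Fl inp fan (cfg u)"
    and G: "\<And>u i f S. u < F \<Longrightarrow> cfg u i = Some (f,S) \<Longrightarrow> grp u i < q f \<and> S \<noteq> {}"
    and Disj: "\<And>u u' i f S S'. u < F \<Longrightarrow> u' < F \<Longrightarrow> u \<noteq> u' \<Longrightarrow> cfg u i = Some (f,S)
       \<Longrightarrow> cfg u' i = Some (f,S') \<Longrightarrow> grp u i = grp u' i \<Longrightarrow> S \<inter> S' = {}"
    and Cov: "\<And>f g j. f \<in> Fl \<Longrightarrow> g < q f \<Longrightarrow> j \<in> fan f \<Longrightarrow>
       \<exists>u<F. \<exists>S. cfg u (inp f) = Some (f,S) \<and> grp u (inp f) = g \<and> j \<in> S"
    and fanne: "\<And>f. f \<in> Fl \<Longrightarrow> fan f \<noteq> {}"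
begin

fun c :: "(nat \<Rightarrow> nat \<Rightarrow> nat) \<Rightarrow> nat \<Rightarrow> nat \<Rightarrow> nat" where
  "c A f 0 = 0"
| "c A f (Suc m) = min (c A f m + q f) (A f (m * F))"

definition P :: "(nat \<Rightarrow> nat \<Rightarrow> nat) \<Rightarrow> nat \<Rightarrow> nat \<Rightarrow> nat option" where
  "P A t i = (case cfg (t mod F) i of None \<Rightarrow> None
     | Some fS \<Rightarrow> (if c A (fst fS) (t div F) + grp (t mod F) i < c A (fst fS) (Suc (t div F))
         then Some (c A (fst fS) (t div F) + grp (t mod F) i) else None))"

lemma c_le_A: "mono (A f) \<Longrightarrow> c A f m \<le> A f (m*F)"
proof (induction m)
  case 0 then show ?case by simp
next
  case (Suc m)
  have "A f (m*F) \<le> A f (Suc m * F)" using Suc.prems by (simp add: monoD)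
  then show ?case by simp
qed

lemma c_Suc_ge: "mono (A f) \<Longrightarrow> c A f m \<le> c A f (Suc m)"
  using c_le_A[of A f m] by simp

lemma c_mono: "mono (A f) \<Longrightarrow> m \<le> m' \<Longrightarrow> c A f m \<le> c A f m'"
  using lift_Suc_mono_le[of "c A f" m m'] c_Suc_ge by blast

lemma c_Suc_le: "c A f (Suc m) \<le> c A f m + q f" by simp

lemma c_causal:
  assumes "\<forall>f s. s \<le> t \<longrightarrow> A f s = A' f s"
  shows "m \<le> Suc (t div F) \<Longrightarrow> c A f m = c A' f m"
proof (induction m)
  case 0 then show ?case by simp
next
  case (Suc m)
  have "m * F \<le> (t div F) * F" using Suc.prems by simp
  also have "\<dots> \<le> t" by simp
  finally show ?case using Suc assms by simp
qed

lemma causal_P: "causal P"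
  unfolding causal_def
proof (intro allI impI)
  fix A A' :: "nat \<Rightarrow> nat \<Rightarrow> nat" and t i
  assume h: "\<forall>f s. s \<le> t \<longrightarrow> A f s = A' f s"
  have e: "\<And>f m. m \<le> Suc (t div F) \<Longrightarrow> c A f m = c A' f m" using c_causal[OF h] by blast
  have e1: "\<And>f. c A f (t div F) = c A' f (t div F)" using e by simp
  have e2: "\<And>f. c A f (Suc (t div F)) = c A' f (Suc (t div F))" using e by blast
  show "P A t i = P A' t i" unfolding P_def e1 e2 by (rule refl)
qed

lemma P_Some: "P A t i = Some k \<Longrightarrow> cfg (t mod F) i = Some (f,S) \<Longrightarrow>
   k = c A f (t div F) + grp (t mod F) i \<and> k < c A f (Suc (t div F))"
  unfolding P_def by (auto split: if_splits)

lemma find_frame: "k < c A f m \<Longrightarrow> \<exists>n<m. c A f n \<le> k \<and> k < c A f (Suc n)"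
proof (induction m)
  case 0 then show ?case by simp
next
  case (Suc m)
  show ?case
  proof (cases "k < c A f m")
    case True then show ?thesis using Suc.IH by (meson less_SucI)
  next
    case False then show ?thesis using Suc.prems by auto
  qed
qed

lemma served_mono: "served fan sched F' P' f k T \<Longrightarrow> T \<le> T' \<Longrightarrow> served fan sched F' P' f k T'"
  unfolding served_def delivered_def by (meson less_le_trans)

lemma served_frame:
  assumes "f \<in> Fl" "c A f n \<le> k" "k < c A f (Suc n)"
  shows "served fan cfg F (P A) f k (Suc n * F)"
  unfolding served_def delivered_def
proof
  fix j assume j: "j \<in> fan f"
  define g where "g = k - c A f n"
  have "k \<le> c A f n + q f" using assms(3) c_Suc_le[of A f n] by linarith
  then have g: "g < q f" using assms(2,3) c_Suc_le[of A f n] unfolding g_def by linarith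
  obtain u S where u: "u < F" "cfg u (inp f) = Some (f,S)" "grp u (inp f) = g" "j \<in> S"
    using Cov[OF assms(1) g j] by blast
  define t where "t = n*F + u"
  have tm: "t mod F = u" unfolding t_def using u(1) by simp
  have td: "t div F = n" unfolding t_def using u(1) by simp
  have "P A t (inp f) = Some k" unfolding P_def tm td using u assms(2,3) g_def by simp
  moreover have "t < Suc n * F" unfolding t_def using u(1) by simp
  ultimately show "\<exists>t<Suc n * F. \<exists>i S. cfg (t mod F) i = Some (f, S) \<and> j \<in> S \<and> P A t i = Some k"
    using u tm by blast
qed

lemma cfg_inp: "u < F \<Longrightarrow> cfg u i = Some (f,S) \<Longrightarrow> f \<in> Fl \<and> inp f = i \<and> S \<subseteq> fan f"
  using V unfolding valid_config_def by blast

lemma queue_char: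
  assumes mA: "mono (A f)" and f: "f \<in> Fl"
  shows "in_queue A fan cfg F (P A) f k (m*F) \<longleftrightarrow> c A f m \<le> k \<and> k < A f (m*F)"
proof
  assume q: "in_queue A fan cfg F (P A) f k (m*F)"
  have "\<not> k < c A f m"
  proof
    assume "k < c A f m"
    then obtain n where n: "n < m" "c A f n \<le> k" "k < c A f (Suc n)" using find_frame by blast
    have "served fan cfg F (P A) f k (Suc n * F)" using served_frame[OF f n(2,3)] .
    then have "served fan cfg F (P A) f k (m * F)" by (rule served_mono) (use n(1) mult_le_mono1[of "Suc n" m F] in simp)
    then show False using q unfolding in_queue_def by blast
  qed
  then show "c A f m \<le> k \<and> k < A f (m*F)" using q unfolding in_queue_def by simp
next
  assume h: "c A f m \<le> k \<and> k < A f (m*F)"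
  have "\<not> served fan cfg F (P A) f k (m*F)"
  proof
    assume s: "served fan cfg F (P A) f k (m*F)"
    obtain j where "j \<in> fan f" using fanne[OF f] by blast
    then obtain t i S where t: "t < m*F" "cfg (t mod F) i = Some (f,S)" "P A t i = Some k"
      using s unfolding served_def delivered_def by blast
    have "k < c A f (Suc (t div F))" using P_Some[OF t(3,2)] by simp
    moreover have "Suc (t div F) \<le> m"
    proof -
      have "t div F < m" using t(1) Fpos by (simp add: div_less_iff_less_mult)
      then show ?thesis by simp
    qed
    ultimately have "k < c A f m" using c_mono[of A f, OF mA] by (meson less_le_trans)
    then show False using h by simp
  qed
  then show "in_queue A fan cfg F (P A) f k (m*F)" using h unfolding in_queue_def by simp
qed


lemma send_ok:
  assumes mA: "\<And>f. mono (A f)" and h: "cfg (t mod F) i = Some (f,S)" "P A t i = Some k"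
  shows "in_queue A fan cfg F (P A) f k t"
proof -
  have u: "t mod F < F" using Fpos by simp
  have fi: "f \<in> Fl" "inp f = i" "S \<subseteq> fan f" using cfg_inp[OF u h(1)] by auto
  obtain j where j: "j \<in> S" using G[OF u h(1)] by blast
  define n where "n = t div F"
  have k: "k = c A f n + grp (t mod F) i" "k < c A f (Suc n)" using P_Some[OF h(2,1)] n_def by auto
  have "c A f (Suc n) \<le> A f (n*F)" by simp
  also have "\<dots> \<le> A f t" using mA[of f] unfolding n_def by (simp add: monoD)
  finally have kA: "k < A f t" using k(2) by (meson order.strict_trans2)
  have "\<not> served fan cfg F (P A) f k t"
  proof
    assume "served fan cfg F (P A) f k t"
    then have "delivered cfg F (P A) f k j t" using j fi(3) unfolding served_def by blast
    then obtain t' i' S' where t': "t' < t" "cfg (t' mod F) i' = Some (f,S')" "j \<in> S'" "P A t' i' = Some k"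
      unfolding delivered_def by blast
    have u': "t' mod F < F" using Fpos by simp
    have ii: "i' = i" using cfg_inp[OF u' t'(2)] fi(2) by simp
    define n' where "n' = t' div F"
    have k': "k = c A f n' + grp (t' mod F) i" "k < c A f (Suc n')" using P_Some[OF t'(4,2)] n'_def ii by auto
    have "n' \<le> n" unfolding n_def n'_def using t'(1) by (simp add: div_le_mono)
    moreover have "\<not> n' < n"
    proof
      assume "n' < n"
      then have "c A f (Suc n') \<le> c A f n" using c_mono[of A f "Suc n'" n] mA by (simp del: c.simps)
      then show False using k(1) k'(2) by linarith
    qed
    ultimately have nn: "n' = n" by simp
    have gg: "grp (t' mod F) i = grp (t mod F) i" using k k' nn by simp
    have "t' mod F \<noteq> t mod F"
    proof
      assume "t' mod F = t mod F"
      then have "t' = t" using nn unfolding n_def n'_def by (metis div_mult_mod_eq)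
      then show False using t'(1) by simp
    qed
    then have "S' \<inter> S = {}" using Disj[OF u' u _ t'(2)[unfolded ii] h(1) gg] by blast
    then show False using j t'(3) by blast
  qed
  then show ?thesis unfolding in_queue_def using kA by simp
qed

lemma serve_ok:
  assumes mA: "\<And>f. mono (A f)" and f: "f \<in> Fl" and n: "n \<ge> 1"
    and iq: "in_queue A fan cfg F (P A) f k ((n - 1) * F)"
    and cd: "card {k'. k' < k \<and> in_queue A fan cfg F (P A) f k' ((n - 1) * F)} < q f"
  shows "served fan cfg F (P A) f k (n * F)"
proof -
  define m where "m = n - 1"
  have nm: "n = Suc m" using n m_def by simp
  have qc: "\<And>k. in_queue A fan cfg F (P A) f k (m*F) \<longleftrightarrow> c A f m \<le> k \<and> k < A f (m*F)"
    using queue_char[OF mA f] .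
  have k: "c A f m \<le> k" "k < A f (m*F)" using iq qc unfolding m_def by auto
  have "{k'. k' < k \<and> in_queue A fan cfg F (P A) f k' ((n - 1) * F)} = {c A f m..<k}"
  proof (rule set_eqI)
    fix x
    show "x \<in> {k'. k' < k \<and> in_queue A fan cfg F (P A) f k' ((n - 1) * F)} \<longleftrightarrow> x \<in> {c A f m..<k}"
      using qc[of x] k unfolding m_def[symmetric] by auto
  qed
  then have "k - c A f m < q f" using cd by simp
  then have "k < c A f (Suc m)" using k by simp
  then show ?thesis using served_frame[OF f k(1)] nm by simp
qed

lemma achievable_design:
  assumes "\<forall>f\<in>Fl. r f * of_nat F = of_nat (q f)"
  shows "achievable Fl inp fan r"
proof -
  have H: "\<forall>A. (\<forall>f. mono (A f)) \<longrightarrow>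
    (\<forall>t i f S k. cfg (t mod F) i = Some (f, S) \<and> P A t i = Some k \<longrightarrow>
      in_queue A fan cfg F (P A) f k t) \<and>
    (\<forall>f\<in>Fl. \<forall>n\<ge>1. \<forall>k. in_queue A fan cfg F (P A) f k ((n - 1) * F) \<and>
      card {k'. k' < k \<and> in_queue A fan cfg F (P A) f k' ((n - 1) * F)} < q f \<longrightarrow>
      served fan cfg F (P A) f k (n * F))"
  proof (rule allI, rule impI, rule conjI)
    fix A :: "nat \<Rightarrow> nat \<Rightarrow> nat" assume mA: "\<forall>f. mono (A f)"
    show "\<forall>t i f S k. cfg (t mod F) i = Some (f, S) \<and> P A t i = Some k \<longrightarrow>
      in_queue A fan cfg F (P A) f k t"
    proof (intro allI impI)
      fix t i f S k assume "cfg (t mod F) i = Some (f, S) \<and> P A t i = Some k"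
      then show "in_queue A fan cfg F (P A) f k t" using send_ok[of A t i f S k] mA by blast
    qed
    show "\<forall>f\<in>Fl. \<forall>n\<ge>1. \<forall>k. in_queue A fan cfg F (P A) f k ((n - 1) * F) \<and>
      card {k'. k' < k \<and> in_queue A fan cfg F (P A) f k' ((n - 1) * F)} < q f \<longrightarrow>
      served fan cfg F (P A) f k (n * F)"
    proof (intro ballI allI impI)
      fix f n k assume "f \<in> Fl" "1 \<le> n" and hh: "in_queue A fan cfg F (P A) f k ((n - 1) * F) \<and>
        card {k'. k' < k \<and> in_queue A fan cfg F (P A) f k' ((n - 1) * F)} < q f"
      then show "served fan cfg F (P A) f k (n * F)" using serve_ok[of A f n k] mA by blast
    qed
  qed
  have V': "\<forall>t<F. valid_config Fl inp fan (cfg t)" using V by blast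
  show ?thesis unfolding achievable_def
    apply (rule exI[of _ F], rule conjI[OF Fpos])
    apply (rule exI[of _ q], rule conjI[OF assms])
    apply (rule exI[of _ cfg], rule exI[of _ P])
    using V' causal_P H by blast
qed

end


locale sw2 =
  fixes N F :: nat and q :: "nat \<Rightarrow> nat"
  assumes N1: "N \<ge> 1" and Fpos: "F > 0"
    and sF: "(\<Sum>i=1..N. q i) \<le> F"
    and pF: "\<And>i. i \<in> {1..N} \<Longrightarrow> q 0 + q i \<le> F"
    and tF: "2 * q 0 + (\<Sum>i=1..N. q i) \<le> 2 * F"
begin

definition Q :: "nat \<Rightarrow> nat" where "Q i = (\<Sum>j<i. q (Suc j))"
definition s where "s = Q N"
definition L :: "nat \<Rightarrow> nat" where "L p = (LEAST i. p < Q i)"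
definition a where "a = min (q 0) (F - s)"
definition b where "b = q 0 - a"
definition m where "m = s - b"

lemma Q_Suc: "Q (Suc i) = Q i + q (Suc i)" unfolding Q_def by simp
lemma Q_0: "Q 0 = 0" unfolding Q_def by simp
lemma Q_mono: "i \<le> j \<Longrightarrow> Q i \<le> Q j"
  using lift_Suc_mono_le[of Q i j] Q_Suc by simp
lemma Q_sum: "Q n = (\<Sum>i=1..n. q i)"
  by (induction n) (simp_all add: Q_0 Q_Suc)
lemma s_eq: "s = (\<Sum>i=1..N. q i)" unfolding s_def using Q_sum .
lemma s_F: "s \<le> F" using sF s_eq by simp

lemma L1: assumes "p < s" shows "1 \<le> L p \<and> L p \<le> N \<and> Q (L p - 1) \<le> p \<and> p < Q (L p)"
proof -
  have ex: "p < Q N" using assms s_def by simp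
  have lt: "p < Q (L p)" unfolding L_def using ex by (rule LeastI)
  have le: "L p \<le> N" unfolding L_def using ex by (rule Least_le)
  have ge: "L p \<ge> 1" using lt Q_0 by (cases "L p") auto
  have "\<not> p < Q (L p - 1)"
  proof
    assume "p < Q (L p - 1)"
    then have "L p \<le> L p - 1" unfolding L_def by (rule Least_le)
    then show False using ge by simp
  qed
  then show ?thesis using lt le ge by simp
qed

lemma L2: assumes "1 \<le> i" "Q (i - 1) \<le> p" "p < Q i" shows "L p = i"
proof -
  have le: "L p \<le> i" unfolding L_def using assms(3) by (rule Least_le)
  have lt: "p < Q (L p)" unfolding L_def using assms(3) by (rule LeastI)
  have "\<not> L p < i"
  proof
    assume "L p < i"
    then have "Q (L p) \<le> Q (i - 1)" using Q_mono by simp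
    then show False using lt assms(2) by simp
  qed
  then show ?thesis using le by simp
qed

lemma Q_diff: "1 \<le> i \<Longrightarrow> Q i = Q (i - 1) + q i"
  using Q_Suc[of "i - 1"] by simp

lemma b_props: "b \<le> m" "b + m = s" "a + b = q 0" "a + s \<le> F"
proof -
  have "2 * b \<le> s"
  proof (cases "q 0 \<le> F - s")
    case True then show ?thesis unfolding b_def a_def by simp
  next
    case False then show ?thesis unfolding b_def a_def using tF s_eq s_F by simp
  qed
  then show "b \<le> m" "b + m = s" unfolding m_def by simp_all
  show "a + b = q 0" "a + s \<le> F" unfolding a_def b_def using s_F by auto
qed

lemma b_pos: "0 < b \<Longrightarrow> i \<in> {1..N} \<Longrightarrow> q i \<le> m"
  unfolding m_def b_def a_def using pF[of i] s_F by auto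

lemma Ldiff: assumes "p < b" shows "L p \<noteq> L (p + m)"
proof
  assume eq: "L p = L (p + m)"
  have ps: "p < s" "p + m < s" using assms b_props by simp_all
  note A = L1[OF ps(1)] and B = L1[OF ps(2)]
  have "q (L p) > m" using A B eq Q_diff[of "L p"] by simp
  moreover have "q (L p) \<le> m" using b_pos[of "L p"] assms A by simp
  ultimately show False by simp
qed


definition cfg :: "nat \<Rightarrow> config" where
  "cfg u = (\<lambda>i. if i = 2 then (if u < s then Some (L u, {L u}) else None)
     else if i = 1 then (if u < b then Some (0, {1..N} - {L u})
        else if m \<le> u \<and> u < s then Some (0, {L (u - m)})
        else if s \<le> u \<and> u < s + a then Some (0, {1..N})
        else None)
     else None)"

definition grp :: "nat \<Rightarrow> nat \<Rightarrow> nat" where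
  "grp u i = (if i = 2 then u - Q (L u - 1) else if u < b then a + u
     else if m \<le> u \<and> u < s then a + (u - m) else u - s)"

lemma cfg2: "cfg u 2 = Some (f,S) \<longleftrightarrow> u < s \<and> f = L u \<and> S = {L u}"
  unfolding cfg_def by auto

lemma cfg1: "cfg u 1 = Some (f,S) \<longleftrightarrow> f = 0 \<and>
   ((u < b \<and> S = {1..N} - {L u} \<and> grp u 1 = a + u) \<or>
    (b \<le> u \<and> m \<le> u \<and> u < s \<and> S = {L (u - m)} \<and> grp u 1 = a + (u - m)) \<or>
    (s \<le> u \<and> u < s + a \<and> S = {1..N} \<and> grp u 1 = u - s))"
  unfolding cfg_def grp_def using b_props by auto

lemma cfg_other: "i \<noteq> 1 \<Longrightarrow> i \<noteq> 2 \<Longrightarrow> cfg u i = None"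
  unfolding cfg_def by simp

lemma disj12: assumes "cfg u 1 = Some (f1,S1)" "cfg u 2 = Some (f2,S2)" shows "S1 \<inter> S2 = {}"
proof -
  have u: "u < s" "S2 = {L u}" using assms(2) cfg2 by auto
  show ?thesis using assms(1) unfolding cfg1
  proof (elim conjE disjE)
    assume "b \<le> u" "m \<le> u" "u < s" "S1 = {L (u - m)}"
    moreover have "u - m < b" using \<open>u < s\<close> \<open>m \<le> u\<close> b_props by simp
    ultimately show ?thesis using Ldiff[of "u - m"] u by auto
  qed (use u in auto)
qed

lemma valid: "valid_config {0..N} inp2N (fan2N N) (cfg u)"
  unfolding valid_config_def
proof (rule conjI; intro allI impI)
  fix i f S assume h: "cfg u i = Some (f, S)"
  consider "i = 1" | "i = 2" using h cfg_other[of i u] by auto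
  then show "f \<in> {0..N} \<and> inp2N f = i \<and> S \<subseteq> fan2N N f"
  proof cases
    case 1
    have h1: "cfg u 1 = Some (f, S)" using h 1 by simp
    have LL: "\<And>p. p < s \<Longrightarrow> L p \<in> {1..N}" using L1 by auto
    have "u < s \<Longrightarrow> u - m < s" by simp
    then show ?thesis using h1 LL unfolding cfg1 by (auto simp: inp2N_def fan2N_def 1)
  next
    case 2
    then have "u < s" "f = L u" "S = {L u}" using h cfg2 by auto
    then show ?thesis using L1[of u] 2 by (auto simp: inp2N_def fan2N_def)
  qed
next
  fix i1 i2 f1 f2 S1 S2
  assume h: "cfg u i1 = Some (f1, S1) \<and> cfg u i2 = Some (f2, S2) \<and> i1 \<noteq> i2"
  have "i1 = 1 \<or> i1 = 2" using h cfg_other[of i1 u] by auto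
  moreover have "i2 = 1 \<or> i2 = 2" using h cfg_other[of i2 u] by auto
  ultimately have "(i1 = 1 \<and> i2 = 2) \<or> (i1 = 2 \<and> i2 = 1)" using h by auto
  then show "S1 \<inter> S2 = {}" using h disj12 by blast
qed


lemma LL: "p < s \<Longrightarrow> L p \<in> {1..N}" using L1 by auto

lemma Gp: assumes h: "cfg u i = Some (f,S)" shows "grp u i < q f \<and> S \<noteq> {}"
proof -
  have "i = 1 \<or> i = 2" using h cfg_other[of i u] by auto
  then show ?thesis
  proof
    assume i: "i = 2"
    then have u: "u < s" "f = L u" "S = {L u}" using h cfg2 by auto
    have "grp u i = u - Q (L u - 1)" using i unfolding grp_def by simp
    moreover have "u - Q (L u - 1) < q (L u)" using L1[OF u(1)] Q_diff[of "L u"] by arith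
    ultimately show ?thesis using u by simp
  next
    assume i: "i = 1"
    have h1: "cfg u 1 = Some (f, S)" using h i by simp
    note bp = b_props
    show ?thesis using h1 unfolding cfg1
    proof (elim conjE disjE)
      assume A: "f = 0" "u < b" "S = {1..N} - {L u}" "grp u 1 = a + u"
      have "u + m < s" using A(2) bp by simp
      then have "L (u + m) \<in> S" using LL[of "u+m"] Ldiff[OF A(2)] A(3) by auto
      then show ?thesis using A bp i by auto
    qed (use i bp N1 in auto)
  qed
qed

lemma Disjp: assumes "u \<noteq> u'" "cfg u i = Some (f,S)" "cfg u' i = Some (f,S')" "grp u i = grp u' i"
  shows "S \<inter> S' = {}"
proof -
  have "i = 1 \<or> i = 2" using assms(2) cfg_other[of i u] by auto
  then show ?thesis
  proof
    assume i: "i = 2"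
    then have u: "u < s" "f = L u" "S = {L u}" "u' < s" "f = L u'" using assms(2,3) cfg2 by auto
    have "u - Q (f - 1) = u' - Q (f - 1)" using assms(4) i u unfolding grp_def by simp
    moreover have "Q (f - 1) \<le> u" "Q (f - 1) \<le> u'" using L1[OF u(1)] L1[OF u(4)] u by auto
    ultimately show ?thesis using assms(1) by simp
  next
    assume i: "i = 1"
    have h1: "cfg u 1 = Some (f, S)" "cfg u' 1 = Some (f, S')" using assms(2,3) i by simp_all
    have g: "grp u 1 = grp u' 1" using assms(4) i by simp
    note bp = b_props
    have A: "(grp u 1 < a \<and> u = s + grp u 1) \<or> (a \<le> grp u 1 \<and> u = grp u 1 - a \<and> S = {1..N} - {L (grp u 1 - a)})
       \<or> (a \<le> grp u 1 \<and> u = m + (grp u 1 - a) \<and> S = {L (grp u 1 - a)})" using h1(1) bp unfolding cfg1 by auto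
    have B: "(grp u' 1 < a \<and> u' = s + grp u' 1) \<or> (a \<le> grp u' 1 \<and> u' = grp u' 1 - a \<and> S' = {1..N} - {L (grp u' 1 - a)})
       \<or> (a \<le> grp u' 1 \<and> u' = m + (grp u' 1 - a) \<and> S' = {L (grp u' 1 - a)})" using h1(2) bp unfolding cfg1 by auto
    show ?thesis using A B g assms(1) by auto
  qed
qed

lemma Covp: assumes f: "f \<in> {0..N}" and g: "g < q f" and j: "j \<in> fan2N N f"
  shows "\<exists>u<F. \<exists>S. cfg u (inp2N f) = Some (f,S) \<and> grp u (inp2N f) = g \<and> j \<in> S"
proof (cases "f = 0")
  case True
  note bp = b_props
  have i: "inp2N f = 1" "j \<in> {1..N}" using True j unfolding inp2N_def fan2N_def by auto
  show ?thesis
  proof (cases "g < a")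
    case ga: True
    define u where "u = s + g"
    have gg: "grp u 1 = g" using ga bp unfolding u_def grp_def by auto
    have "u < F" "cfg u 1 = Some (0, {1..N})" "grp u 1 = g"
      using ga bp gg unfolding u_def cfg1 by auto
    then show ?thesis using i True by auto
  next
    case ga: False
    define p where "p = g - a"
    have p: "p < b" using ga g True bp unfolding p_def by simp
    show ?thesis
    proof (cases "j = L p")
      case jL: True
      define u where "u = m + p"
      have gg: "grp u 1 = g" using ga p bp unfolding u_def grp_def p_def by auto
      have "u < F" "cfg u 1 = Some (0, {L p})" "grp u 1 = g"
        using ga p bp gg unfolding u_def cfg1 p_def by auto
      then show ?thesis using i True jL by auto
    next
      case jL: False
      have gg: "grp p 1 = g" using ga p bp unfolding grp_def p_def by auto
      have "p < F" "cfg p 1 = Some (0, {1..N} - {L p})" "grp p 1 = g"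
        using ga p bp gg unfolding cfg1 p_def by auto
      then show ?thesis using i True jL by auto
    qed
  qed
next
  case False
  then have f1: "1 \<le> f" "f \<le> N" "inp2N f = 2" "j = f" using f j unfolding inp2N_def fan2N_def by auto
  define u where "u = Q (f - 1) + g"
  have uQ: "u < Q f" unfolding u_def using g Q_diff[OF f1(1)] by simp
  have "Q f \<le> s" unfolding s_def using Q_mono f1(2) by simp
  then have us: "u < s" using uQ by simp
  have Lu: "L u = f" using L2[OF f1(1) _ uQ] unfolding u_def by simp
  have "u < F" using us s_F by simp
  moreover have "cfg u 2 = Some (f, {f})" using cfg2 us Lu by simp
  moreover have "grp u 2 = u - Q (L u - 1)" unfolding grp_def by simp
  then have "grp u 2 = g" using Lu u_def by simp
  ultimately show ?thesis using f1 by auto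
qed

lemma is_design: "design {0..N} inp2N (fan2N N) F q cfg grp"
proof
  show "0 < F" by (rule Fpos)
  show "\<And>u. u < F \<Longrightarrow> valid_config {0..N} inp2N (fan2N N) (cfg u)" by (rule valid)
  show "\<And>u i f S. u < F \<Longrightarrow> cfg u i = Some (f, S) \<Longrightarrow> grp u i < q f \<and> S \<noteq> {}" using Gp by blast
  show "\<And>u u' i f S S'. u < F \<Longrightarrow> u' < F \<Longrightarrow> u \<noteq> u' \<Longrightarrow> cfg u i = Some (f, S) \<Longrightarrow>
       cfg u' i = Some (f, S') \<Longrightarrow> grp u i = grp u' i \<Longrightarrow> S \<inter> S' = {}" using Disjp by blast
  show "\<And>f g j. f \<in> {0..N} \<Longrightarrow> g < q f \<Longrightarrow> j \<in> fan2N N f \<Longrightarrow>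
       \<exists>u<F. \<exists>S. cfg u (inp2N f) = Some (f, S) \<and> grp u (inp2N f) = g \<and> j \<in> S" using Covp by blast
  show "\<And>f. f \<in> {0..N} \<Longrightarrow> fan2N N f \<noteq> {}" using N1 unfolding fan2N_def by auto
qed

end


lemma common_denom:
  fixes r :: "nat \<Rightarrow> rat"
  shows "finite I \<Longrightarrow> \<exists>F::nat. F > 0 \<and> (\<forall>i\<in>I. \<exists>z::int. r i * of_nat F = of_int z)"
proof (induction I rule: finite_induct)
  case empty then show ?case by (rule exI[of _ 1]) simp
next
  case (insert x I)
  obtain F where F: "F > 0" "\<forall>i\<in>I. \<exists>z::int. r i * of_nat F = of_int z" using insert.IH by blast
  obtain a d where ad: "quotient_of (r x) = (a, d)" by (cases "quotient_of (r x)") auto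
  have d: "d > 0" using quotient_of_denom_pos'[of "r x"] ad by simp
  have rx: "r x = of_int a / of_int d" using quotient_of_div[OF ad] .
  define F' where "F' = F * nat d"
  have F'pos: "F' > 0" using F(1) d unfolding F'_def by simp
  have ofF': "(of_nat F' :: rat) = of_nat F * of_int d" unfolding F'_def using d by simp
  show ?case
  proof (rule exI[of _ F'], intro conjI ballI)
    show "F' > 0" by (rule F'pos)
    fix i assume "i \<in> insert x I"
    then show "\<exists>z::int. r i * of_nat F' = of_int z"
    proof
      assume "i = x"
      have "r x * of_nat F' = of_int (a * int F)" unfolding ofF' rx using d by simp
      then show ?thesis using \<open>i = x\<close> by blast
    next
      assume "i \<in> I"
      then obtain z where "r i * of_nat F = of_int z" using F(2) by blast
      then have "r i * of_nat F' = of_int (z * d)" unfolding ofF' by (simp add: mult.assoc[symmetric])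
      then show ?thesis by blast
    qed
  qed
qed


lemma necessity_nat:
  fixes sched :: "nat \<Rightarrow> config" and PA :: "nat \<Rightarrow> nat \<Rightarrow> nat option" and q :: "nat \<Rightarrow> nat"
  assumes N1: "N \<ge> 1"
    and V: "\<forall>t<F. valid_config (flows2N N) inp2N (fan2N N) (sched t)"
    and D: "\<And>f k j. f \<in> {0..N} \<Longrightarrow> k < q f \<Longrightarrow> j \<in> fan2N N f \<Longrightarrow>
       \<exists>t<F. \<exists>i S. sched t i = Some (f,S) \<and> j \<in> S \<and> PA t i = Some k"
  shows "(\<Sum>i=1..N. q i) \<le> F \<and> (\<forall>i\<in>{1..N}. q 0 + q i \<le> F) \<and> 2 * q 0 + (\<Sum>i=1..N. q i) \<le> 2 * F"
proof -
  have VV: "\<And>t i f S. t < F \<Longrightarrow> sched t i = Some (f,S) \<Longrightarrow> f \<in> {0..N} \<and> inp2N f = i \<and> S \<subseteq> fan2N N f"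
    using V unfolding valid_config_def flows2N_def by blast
  have VD: "\<And>t S1 S2 f1 f2. t < F \<Longrightarrow> sched t 1 = Some (f1,S1) \<Longrightarrow> sched t 2 = Some (f2,S2) \<Longrightarrow> S1 \<inter> S2 = {}"
  proof -
    fix t S1 S2 f1 f2 assume "t < F" "sched t 1 = Some (f1,S1)" "sched t 2 = Some (f2,S2)"
    moreover have "(1::nat) \<noteq> 2" by simp
    ultimately show "S1 \<inter> S2 = {}" using V unfolding valid_config_def by blast
  qed
  have D0: "\<And>k j. k < q 0 \<Longrightarrow> j \<in> {1..N} \<Longrightarrow> \<exists>t<F. \<exists>S. sched t 1 = Some (0,S) \<and> j \<in> S \<and> PA t 1 = Some k"
  proof -
    fix k j assume "k < q 0" "j \<in> {1..N}"
    then obtain t i S where t: "t < F" "sched t i = Some (0,S)" "j \<in> S" "PA t i = Some k"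
      using D[of 0 k j] unfolding fan2N_def by auto
    have "i = 1" using VV[OF t(1,2)] unfolding inp2N_def by simp
    then show "\<exists>t<F. \<exists>S. sched t 1 = Some (0,S) \<and> j \<in> S \<and> PA t 1 = Some k" using t by blast
  qed
  have Di: "\<And>i k. i \<in> {1..N} \<Longrightarrow> k < q i \<Longrightarrow> \<exists>t<F. \<exists>S. sched t 2 = Some (i,S) \<and> i \<in> S \<and> PA t 2 = Some k"
  proof -
    fix i k assume i: "i \<in> {1..N}" "k < q i"
    then obtain t i' S where t: "t < F" "sched t i' = Some (i,S)" "i \<in> S" "PA t i' = Some k"
      using D[of i k i] unfolding fan2N_def by auto
    have "i' = 2" using VV[OF t(1,2)] i unfolding inp2N_def by simp
    then show "\<exists>t<F. \<exists>S. sched t 2 = Some (i,S) \<and> i \<in> S \<and> PA t 2 = Some k" using t by blast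
  qed
  define T where "T i = {t. t < F \<and> (\<exists>S. sched t 2 = Some (i,S) \<and> i \<in> S \<and> (\<exists>k<q i. PA t 2 = Some k))}" for i
  have Tfin: "finite (T i)" for i unfolding T_def by simp
  have Tcard: "q i \<le> card (T i)" if i: "i \<in> {1..N}" for i
  proof -
    have "{..<q i} \<subseteq> (\<lambda>t. the (PA t 2)) ` T i"
    proof
      fix k assume "k \<in> {..<q i}"
      then obtain t S where "t < F" "sched t 2 = Some (i,S)" "i \<in> S" "PA t 2 = Some k" using Di[OF i] by blast
      then show "k \<in> (\<lambda>t. the (PA t 2)) ` T i" unfolding T_def using \<open>k \<in> {..<q i}\<close>
        by (intro image_eqI[of _ _ t]) auto
    qed
    then have "card {..<q i} \<le> card ((\<lambda>t. the (PA t 2)) ` T i)" by (intro card_mono) (auto intro: Tfin)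
    also have "\<dots> \<le> card (T i)" by (rule card_image_le[OF Tfin])
    finally show ?thesis by simp
  qed
  have pairs: "q 0 + q i \<le> F" if i: "i \<in> {1..N}" for i
  proof -
    define T0 where "T0 = {t. t < F \<and> (\<exists>S. sched t 1 = Some (0,S) \<and> i \<in> S \<and> (\<exists>k<q 0. PA t 1 = Some k))}"
    have T0fin: "finite T0" unfolding T0_def by simp
    have "{..<q 0} \<subseteq> (\<lambda>t. the (PA t 1)) ` T0"
    proof
      fix k assume "k \<in> {..<q 0}"
      then obtain t S where "t < F" "sched t 1 = Some (0,S)" "i \<in> S" "PA t 1 = Some k" using D0 i by blast
      then show "k \<in> (\<lambda>t. the (PA t 1)) ` T0" unfolding T0_def using \<open>k \<in> {..<q 0}\<close>
        by (intro image_eqI[of _ _ t]) auto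
    qed
    then have "card {..<q 0} \<le> card ((\<lambda>t. the (PA t 1)) ` T0)" by (intro card_mono) (auto intro: T0fin)
    also have "\<dots> \<le> card T0" by (rule card_image_le[OF T0fin])
    finally have c0: "q 0 \<le> card T0" by simp
    have dj: "T0 \<inter> T i = {}"
    proof (rule ccontr)
      assume "T0 \<inter> T i \<noteq> {}"
      then obtain t S1 S2 where "t < F" "sched t 1 = Some (0,S1)" "i \<in> S1" "sched t 2 = Some (i,S2)" "i \<in> S2"
        unfolding T0_def T_def by blast
      then show False using VD by blast
    qed
    have "card (T0 \<union> T i) = card T0 + card (T i)" using card_Un_disjoint[OF T0fin Tfin dj] .
    moreover have "card (T0 \<union> T i) \<le> card {..<F}" by (rule card_mono) (auto simp: T0_def T_def)
    ultimately show ?thesis using c0 Tcard[OF i] by simp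
  qed
  define B where "B = {t. t < F \<and> (\<exists>f S. sched t 2 = Some (f,S) \<and> S \<noteq> {})}"
  have Bfin: "finite B" unfolding B_def by simp
  have BF: "card B \<le> F" using card_mono[of "{..<F}" B] unfolding B_def by auto
  have sumB: "(\<Sum>i=1..N. q i) \<le> card B"
  proof -
    have dj: "\<forall>i\<in>{1..N}. \<forall>j\<in>{1..N}. i \<noteq> j \<longrightarrow> T i \<inter> T j = {}"
      unfolding T_def by auto
    have "(\<Sum>i=1..N. q i) \<le> (\<Sum>i=1..N. card (T i))" by (rule sum_mono) (rule Tcard)
    also have "\<dots> = card (\<Union>i\<in>{1..N}. T i)" using card_UN_disjoint[of "{1..N}" T] Tfin dj by simp
    also have "\<dots> \<le> card B" by (rule card_mono[OF Bfin]) (auto simp: T_def B_def)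
    finally show ?thesis .
  qed
  define W where "W k = {t. t < F \<and> (\<exists>S. sched t 1 = Some (0,S) \<and> PA t 1 = Some k)}" for k
  have Wfin: "finite (W k)" for k unfolding W_def by simp
  have W2: "2 \<le> card (W k) + card (W k - B)" if k: "k < q 0" for k
  proof -
    obtain t0 S0 where "t0 < F" "sched t0 1 = Some (0,S0)" "1 \<in> S0" "PA t0 1 = Some k" using D0[OF k, of 1] N1 by auto
    then have "t0 \<in> W k" unfolding W_def by blast
    then have c1: "card (W k) \<ge> 1" using Wfin[of k] by (metis One_nat_def Suc_leI card_gt_0_iff empty_iff)
    show ?thesis
    proof (cases "W k - B = {}")
      case False
      then have "card (W k - B) \<ge> 1" using Wfin[of k] by (metis One_nat_def Suc_leI card_gt_0_iff finite_Diff)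
      then show ?thesis using c1 by simp
    next
      case True
      show ?thesis
      proof (rule ccontr)
        assume "\<not> ?thesis"
        then have "card (W k) = 1" using c1 True by simp
        then obtain t where Wt: "W k = {t}" by (rule card_1_singletonE)
        then have "t \<in> B" using True by auto
        then obtain f S2 where t: "t < F" "sched t 2 = Some (f,S2)" "S2 \<noteq> {}" unfolding B_def by blast
        have f: "f \<in> {0..N}" "inp2N f = 2" "S2 \<subseteq> fan2N N f" using VV[OF t(1,2)] by auto
        have f0: "f \<noteq> 0" using f(2) unfolding inp2N_def by (cases "f = 0") simp_all
        then have S2: "S2 = {f}" "f \<in> {1..N}" using f(1,3) t(3) unfolding fan2N_def by auto
        obtain t' S where t': "t' < F" "sched t' 1 = Some (0,S)" "f \<in> S" "PA t' 1 = Some k"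
          using D0[OF k S2(2)] by blast
        then have "t' \<in> W k" unfolding W_def by blast
        then have "t' = t" using Wt by simp
        then show False using VD[OF t(1) t'(2)[unfolded \<open>t' = t\<close>] t(2)] t'(3) S2(1) by blast
      qed
    qed
  qed
  have djW: "\<forall>i\<in>{..<q 0}. \<forall>j\<in>{..<q 0}. i \<noteq> j \<longrightarrow> W i \<inter> W j = {}"
    unfolding W_def by auto
  have djW': "\<forall>i\<in>{..<q 0}. \<forall>j\<in>{..<q 0}. i \<noteq> j \<longrightarrow> (W i - B) \<inter> (W j - B) = {}"
    using djW by blast
  have "2 * q 0 = (\<Sum>k<q 0. 2)" by simp
  also have "\<dots> \<le> (\<Sum>k<q 0. card (W k) + card (W k - B))" by (rule sum_mono) (use W2 in simp)
  also have "\<dots> = (\<Sum>k<q 0. card (W k)) + (\<Sum>k<q 0. card (W k - B))" by (rule sum.distrib)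
  also have "(\<Sum>k<q 0. card (W k)) = card (\<Union>k\<in>{..<q 0}. W k)"
    using card_UN_disjoint[of "{..<q 0}" W] Wfin djW by simp
  also have "(\<Sum>k<q 0. card (W k - B)) = card (\<Union>k\<in>{..<q 0}. W k - B)"
    using card_UN_disjoint[of "{..<q 0}" "\<lambda>k. W k - B"] Wfin djW' by simp
  also have "card (\<Union>k\<in>{..<q 0}. W k) \<le> F"
    using card_mono[of "{..<F}" "\<Union>k\<in>{..<q 0}. W k"] unfolding W_def by auto
  also have "card (\<Union>k\<in>{..<q 0}. W k - B) \<le> card ({..<F} - B)"
    by (rule card_mono) (auto simp: W_def)
  also have "card ({..<F} - B) = F - card B"
    using card_Diff_subset[OF Bfin] by (simp add: B_def subset_iff)
  finally have "2 * q 0 \<le> F + (F - card B)" by simp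
  then have "2 * q 0 + (\<Sum>i=1..N. q i) \<le> 2 * F" using sumB BF by simp
  then show ?thesis using sumB BF pairs by simp
qed



lemma conv:
  fixes r :: "nat \<Rightarrow> rat" and q :: "nat \<Rightarrow> nat"
  assumes F: "F > 0" and E: "\<forall>f\<in>{0..N}. r f * of_nat F = of_nat (q f)"
  shows "((\<forall>i\<in>{0..N}. r i \<ge> 0) \<and> (\<Sum>i=1..N. r i) \<le> 1 \<and> (\<forall>i\<in>{1..N}. r 0 + r i \<le> 1) \<and>
      2 * r 0 + (\<Sum>i=1..N. r i) \<le> 2) \<longleftrightarrow>
    ((\<Sum>i=1..N. q i) \<le> F \<and> (\<forall>i\<in>{1..N}. q 0 + q i \<le> F) \<and> 2 * q 0 + (\<Sum>i=1..N. q i) \<le> 2 * F)"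
proof -
  have Fp: "(0::rat) < of_nat F" using F by simp
  have rq: "r i = of_nat (q i) / of_nat F" if "i \<in> {0..N}" for i
    using E that Fp by (simp add: eq_divide_eq)
  have nn: "\<forall>i\<in>{0..N}. r i \<ge> 0" using rq by simp
  have s: "(\<Sum>i=1..N. r i) = of_nat (\<Sum>i=1..N. q i) / of_nat F"
    by (simp add: rq sum_divide_distrib)
  have r0: "r 0 = of_nat (q 0) / of_nat F" using rq by simp
  have c1: "(\<Sum>i=1..N. r i) \<le> 1 \<longleftrightarrow> (\<Sum>i=1..N. q i) \<le> F"
    unfolding s using Fp by (simp add: divide_le_eq del: of_nat_sum)
  have c2: "r 0 + r i \<le> 1 \<longleftrightarrow> q 0 + q i \<le> F" if "i \<in> {1..N}" for i
  proof -
    have "r 0 + r i = of_nat (q 0 + q i) / of_nat F" using rq[of 0] rq[of i] that by (simp add: add_divide_distrib)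
    moreover have "(of_nat (q 0 + q i) :: rat) \<le> of_nat F \<longleftrightarrow> q 0 + q i \<le> F" by (rule of_nat_le_iff)
    ultimately show ?thesis using Fp by (simp add: divide_le_eq del: of_nat_add)
  qed
  have c3: "2 * r 0 + (\<Sum>i=1..N. r i) \<le> 2 \<longleftrightarrow> 2 * q 0 + (\<Sum>i=1..N. q i) \<le> 2 * F"
  proof -
    have "2 * r 0 + (\<Sum>i=1..N. r i) = of_nat (2 * q 0 + (\<Sum>i=1..N. q i)) / of_nat F"
      unfolding s r0 by (simp add: add_divide_distrib)
    moreover have "(of_nat (2 * q 0 + (\<Sum>i=1..N. q i)) :: rat) \<le> 2 * of_nat F \<longleftrightarrow> 2 * q 0 + (\<Sum>i=1..N. q i) \<le> 2 * F"
      by (metis of_nat_le_iff of_nat_mult of_nat_numeral)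
    ultimately show ?thesis using Fp by (simp add: divide_le_eq del: of_nat_add of_nat_sum of_nat_mult)
  qed
  show ?thesis using nn c1 c2 c3 by blast
qed


theorem theorem8:
  fixes N :: nat and r :: "nat \<Rightarrow> rat"
  assumes "N \<ge> 1"
  shows "achievable (flows2N N) inp2N (fan2N N) r \<longleftrightarrow>
    (\<forall>i\<in>{0..N}. r i \<ge> 0) \<and>
    (\<Sum>i=1..N. r i) \<le> 1 \<and>
    (\<forall>i\<in>{1..N}. r 0 + r i \<le> 1) \<and>
    2 * r 0 + (\<Sum>i=1..N. r i) \<le> 2"
proof
  assume "achievable (flows2N N) inp2N (fan2N N) r"
  then obtain F q sched P where F: "F > 0" and E: "\<forall>f\<in>flows2N N. r f * of_nat F = of_nat (q f)"
    and V: "\<forall>t<F. valid_config (flows2N N) inp2N (fan2N N) (sched t)"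
    and Hall: "\<forall>A. (\<forall>f. mono (A f)) \<longrightarrow>
            (\<forall>t i f S k. sched (t mod F) i = Some (f, S) \<and> P A t i = Some k
                 \<longrightarrow> in_queue A (fan2N N) sched F (P A) f k t) \<and>
            (\<forall>f\<in>flows2N N. \<forall>n\<ge>1. \<forall>k. in_queue A (fan2N N) sched F (P A) f k ((n - 1) * F) \<and>
                 card {k'. k' < k \<and> in_queue A (fan2N N) sched F (P A) f k' ((n - 1) * F)} < q f
                 \<longrightarrow> served (fan2N N) sched F (P A) f k (n * F))"
    unfolding achievable_def by (elim exE conjE) blast
  define K where "K = (\<Sum>i\<le>N. q i)"
  define A :: "nat \<Rightarrow> nat \<Rightarrow> nat" where "A = (\<lambda>f t. K)"
  have mA: "\<forall>f. mono (A f)" unfolding A_def mono_def by simp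
  have H1: "\<And>f k. f \<in> flows2N N \<Longrightarrow> in_queue A (fan2N N) sched F (P A) f k 0 \<and>
                 card {k'. k' < k \<and> in_queue A (fan2N N) sched F (P A) f k' 0} < q f
                 \<Longrightarrow> served (fan2N N) sched F (P A) f k F"
  proof -
    fix f k assume "f \<in> flows2N N" and h: "in_queue A (fan2N N) sched F (P A) f k 0 \<and>
                 card {k'. k' < k \<and> in_queue A (fan2N N) sched F (P A) f k' 0} < q f"
    have "\<forall>f\<in>flows2N N. \<forall>n\<ge>1. \<forall>k. in_queue A (fan2N N) sched F (P A) f k ((n - 1) * F) \<and>
                 card {k'. k' < k \<and> in_queue A (fan2N N) sched F (P A) f k' ((n - 1) * F)} < q f
                 \<longrightarrow> served (fan2N N) sched F (P A) f k (n * F)" using Hall mA by blast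
    then have "in_queue A (fan2N N) sched F (P A) f k ((1 - 1) * F) \<and>
                 card {k'. k' < k \<and> in_queue A (fan2N N) sched F (P A) f k' ((1 - 1) * F)} < q f
                 \<longrightarrow> served (fan2N N) sched F (P A) f k (1 * F)" using \<open>f \<in> flows2N N\<close> by blast
    then show "served (fan2N N) sched F (P A) f k F" using h by simp
  qed
  have fne: "fan2N N f \<noteq> {}" for f using assms unfolding fan2N_def by auto
  have iq0: "in_queue A (fan2N N) sched F (P A) f k 0 \<longleftrightarrow> k < K" for f k
  proof -
    have "\<not> served (fan2N N) sched F (P A) f k 0" using fne[of f] unfolding served_def delivered_def by auto
    then show ?thesis unfolding in_queue_def A_def by simp
  qed
  have D: "\<exists>t<F. \<exists>i S. sched t i = Some (f,S) \<and> j \<in> S \<and> P A t i = Some k"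
    if f: "f \<in> {0..N}" and k: "k < q f" and j: "j \<in> fan2N N f" for f k j
  proof -
    have "q f \<le> K" unfolding K_def using f by (intro member_le_sum) auto
    then have kK: "k < K" using k by simp
    have "{k'. k' < k \<and> in_queue A (fan2N N) sched F (P A) f k' 0} = {..<k}" using iq0 kK by auto
    then have "served (fan2N N) sched F (P A) f k F" using H1[of f k] f k kK iq0 unfolding flows2N_def by simp
    then obtain t i S where "t < F" "sched (t mod F) i = Some (f,S)" "j \<in> S" "P A t i = Some k"
      using j unfolding served_def delivered_def by blast
    then show ?thesis by auto
  qed
  have nat: "(\<Sum>i=1..N. q i) \<le> F \<and> (\<forall>i\<in>{1..N}. q 0 + q i \<le> F) \<and> 2 * q 0 + (\<Sum>i=1..N. q i) \<le> 2 * F"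
    using necessity_nat[OF assms V D] by blast
  show "(\<forall>i\<in>{0..N}. r i \<ge> 0) \<and> (\<Sum>i=1..N. r i) \<le> 1 \<and> (\<forall>i\<in>{1..N}. r 0 + r i \<le> 1) \<and>
    2 * r 0 + (\<Sum>i=1..N. r i) \<le> 2"
    using conv[OF F, of N r q] E nat unfolding flows2N_def by blast
next
  assume R: "(\<forall>i\<in>{0..N}. r i \<ge> 0) \<and> (\<Sum>i=1..N. r i) \<le> 1 \<and> (\<forall>i\<in>{1..N}. r 0 + r i \<le> 1) \<and>
    2 * r 0 + (\<Sum>i=1..N. r i) \<le> 2"
  obtain F where F: "F > 0" and Z: "\<forall>i\<in>{0..N}. \<exists>z::int. r i * of_nat F = of_int z"
    using common_denom[of "{0..N}" r] by blast
  define q where "q i = nat \<lfloor>r i * of_nat F\<rfloor>" for i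
  have E: "\<forall>f\<in>{0..N}. r f * of_nat F = of_nat (q f)"
  proof
    fix f assume f: "f \<in> {0..N}"
    then obtain z where z: "r f * of_nat F = of_int z" using Z by blast
    have "r f * of_nat F \<ge> 0" using R f by simp
    then have "z \<ge> 0" using z by simp
    then show "r f * of_nat F = of_nat (q f)" unfolding q_def z by simp
  qed
  have nat: "(\<Sum>i=1..N. q i) \<le> F \<and> (\<forall>i\<in>{1..N}. q 0 + q i \<le> F) \<and> 2 * q 0 + (\<Sum>i=1..N. q i) \<le> 2 * F"
    using conv[OF F E] R by blast
  interpret sw2 N F q using assms F nat by unfold_locales auto
  interpret design "{0..N}" inp2N "fan2N N" F q cfg grp by (rule is_design)
  show "achievable (flows2N N) inp2N (fan2N N) r" unfolding flows2N_def
    by (rule achievable_design) (use E in blast)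
qed


end
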